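(* Let $\delta>0$, $r\in\mathbb{N}$, $r'\in(1,+\infty)$. Let $\overline{D}(\delta,r)=\{s\in\mathbb{C}:\min_{n\in\mathbb{N}}|s-n|\ge\delta,\ |s|\le r\}$. Then there is a constant $C>0$ depending only on $r,r',\delta$ such that for all $d\in\mathbb{C}$ with $\operatorname{Re}d\ge1/r'$ and $|d|\le r'$, all $s\in\overline{D}(\delta,r)$ and all $k\in\mathbb{N}_0$, \[ |\zeta(s-k,d)|\le C\Big(\frac{e^2}{2\pi}\Big)^kk!\,(k+1)^{r+1}(1+r'^{2k}). \]
   Context: $\zeta(s,d)=\sum_{n\ge0}(n+d)^{-s}$ is the Hurwitz zeta function, meromorphically continued in $s$; $\mathbb{N}=\{1,2,\dots\}$, $\mathbb{N}_0=\{0,1,\dots\}$. *)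

theory Defs
  imports "HOL-Complex_Analysis.Complex_Analysis"
begin

text \<open>Hurwitz zeta function zeta(s,d) = sum_{n>=0} (n+d)^(-s), meromorphically continued
  in s: for fixed d it is the unique function holomorphic on the complex plane minus {1}
  that agrees with the Dirichlet series for Re s > 1 (the value at the pole s = 1 is
  normalised to 0 only to make the function unique; it is never used).
  Relevant here only for Re d > 0, where the principal-branch powr is the standard choice.\<close>
definition hurwitz_zeta :: "complex \<Rightarrow> complex \<Rightarrow> complex" where
  "hurwitz_zeta s d =
     (THE f. f holomorphic_on (UNIV - {1}) \<and> f 1 = 0 \<and>
        (\<forall>z. 1 < Re z \<longrightarrow> f z = (\<Sum>n. (of_nat n + d) powr (- z)))) s"

definition Dbar :: "real \<Rightarrow> nat \<Rightarrow> complex set" where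
  "Dbar \<delta> r = {s. (\<forall>n::nat. n \<ge> 1 \<longrightarrow> \<delta> \<le> cmod (s - of_nat n)) \<and> cmod s \<le> real r}"

end

theory Submission
  imports Defs
begin


lemma norm_powr_le:
  fixes x y :: complex
  assumes "0 < Re x"
  shows "norm (x powr y) \<le> norm x powr Re y * exp (\<bar>Im y\<bar> * pi / 2)"
proof -
  have x0: "x \<noteq> 0" using assms by auto
  have A: "\<bar>Arg x\<bar> < pi/2" using Re_Ln_pos_lt_imp[OF assms] Arg_eq_Im_Ln[OF x0] by simp
  have "- Im y * Arg x \<le> \<bar>Im y * Arg x\<bar>" by linarith
  also have "\<dots> = \<bar>Im y\<bar> * \<bar>Arg x\<bar>" by (simp add: abs_mult)
  also have "\<dots> \<le> \<bar>Im y\<bar> * (pi/2)" using A by (intro mult_left_mono) auto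
  finally have "exp (- Im y * Arg x) \<le> exp (\<bar>Im y\<bar> * pi / 2)" by simp
  then show ?thesis by (simp add: norm_powr_complex mult_left_mono)
qed

lemma gch_Suc: "(x::'a::field_char_0) gchoose (Suc k) = (x gchoose k) * (x - of_nat k) / of_nat (Suc k)"
  by (simp add: gbinomial_prod_rev prod.atLeast0_lessThan_Suc field_simps)

lemma norm_gchoose_le:
  fixes z :: complex
  assumes "\<And>i. i < j \<Longrightarrow> norm (z - of_nat i) \<le> real m - real i" "j \<le> m"
  shows "norm (z gchoose j) \<le> real (m choose j)"
  using assms
proof (induction j)
  case 0 then show ?case by simp
next
  case (Suc j)
  have IH: "norm (z gchoose j) \<le> real (m choose j)" using Suc by auto
  have B: "norm (z - of_nat j) \<le> real m - real j" using Suc by auto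
  have "norm (z gchoose Suc j) = norm (z gchoose j) * norm (z - of_nat j) / real (Suc j)"
    by (simp add: gch_Suc norm_mult norm_divide del: of_nat_Suc)
  also have "\<dots> \<le> real (m choose j) * (real m - real j) / real (Suc j)"
    by (intro divide_right_mono mult_mono IH B) auto
  also have "\<dots> = real (m choose Suc j)"
    by (simp add: binomial_gbinomial gch_Suc of_nat_diff)
  finally show ?case .
qed

lemma norm_gchoose_crude:
  fixes z :: complex
  assumes "norm z \<le> real n"
  shows "norm (z gchoose j) \<le> 2^n * 4^j"
proof -
  have "norm (z gchoose j) \<le> real ((n + 2*j) choose j)"
  proof (rule norm_gchoose_le)
    fix i assume "i < j"
    have "norm (z - of_nat i) \<le> norm z + real i" by (metis norm_triangle_ineq4 norm_of_nat)
    then show "norm (z - of_nat i) \<le> real (n + 2*j) - real i" using assms \<open>i<j\<close> by simp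
  qed simp
  also have "\<dots> \<le> 2^(n+2*j)" using binomial_le_pow2[of "n+2*j" j] by (metis of_nat_le_iff of_nat_numeral of_nat_power)
  also have "\<dots> = 2^n * 4^j" by (simp add: power_add power_mult)
  finally show ?thesis .
qed



definition bb :: "nat \<Rightarrow> complex \<Rightarrow> complex" where
  "bb j w = ((-w) gchoose (Suc j)) / of_nat (Suc (Suc j))"
definition pp :: "nat \<Rightarrow> complex \<Rightarrow> complex" where
  "pp j w = - ((-w) gchoose j) / of_nat (Suc j * Suc (Suc j))"

lemma powr_mult_split:
  fixes x y a :: complex
  assumes "0 < Re x" "0 < Re y"
  shows "(x*y) powr a = x powr a * y powr a"
proof -
  have x0: "x \<noteq> 0" and y0: "y \<noteq> 0" using assms by auto
  have "Ln (x*y) = Ln x + Ln y"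
    using Re_Ln_pos_lt_imp[OF assms(1)] Re_Ln_pos_lt_imp[OF assms(2)] x0 y0
    by (intro Ln_times_simple) auto
  then show ?thesis using x0 y0 by (simp add: powr_def distrib_left exp_add)
qed

lemma powr_minus_nat:
  fixes x a :: complex
  assumes "x \<noteq> 0"
  shows "x powr (a - of_nat n) = x powr a / x ^ n"
  using assms by (simp add: powr_diff)

lemma point_identity:
  fixes x w :: complex
  assumes x: "1 < Re x" and w: "w \<noteq> 1"
  shows "(\<lambda>j. bb j w * x powr (-w - of_nat (Suc j))) sums
           (x powr (1-w)/(w-1) - (x+1) powr (1-w)/(w-1) - x powr (-w))"
proof -
  define z where "z = inverse x"
  have x0: "x \<noteq> 0" using x by auto
  have nx: "1 < norm x" using x abs_Re_le_cmod[of x] by linarith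
  have nz: "norm z < 1" using nx by (simp add: z_def norm_inverse inverse_less_1_iff)
  have Rez: "0 < Re (1 + z)" using nz abs_Re_le_cmod[of z] by simp
  have S1: "(\<lambda>n. ((1-w) gchoose n) * z^n) sums (1+z) powr (1-w)"
    by (rule gen_binomial_complex[OF nz])
  have eq: "(x+1) powr (1-w) = x powr (1-w) * (1+z) powr (1-w)"
  proof -
    have "x + 1 = x * (1 + z)" using x0 by (simp add: z_def field_simps)
    then show ?thesis using powr_mult_split[of x "1+z" "1-w"] x Rez by simp
  qed
  define f where "f n = ((1-w) gchoose n) * x powr (1 - w - of_nat n)" for n
  have fn: "f n = x powr (1-w) * (((1-w) gchoose n) * z^n)" for n
  proof -
    have "x powr (1 - w - of_nat n) = x powr (1-w) / x^n" by (rule powr_minus_nat[OF x0])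
    then show ?thesis unfolding f_def z_def using x0 by (simp add: power_inverse field_simps)
  qed
  have S2: "f sums (x+1) powr (1-w)"
    unfolding fn eq by (rule sums_mult[OF S1])
  have S3: "(\<lambda>j. f (j+2)) sums ((x+1) powr (1-w) - (\<Sum>i<2. f i))"
    using S2 sums_iff_shift[of f 2] by simp
  have s2: "(\<Sum>i<2. f i) = x powr (1-w) + (1-w) * x powr (-w)"
    by (simp add: f_def numeral_2_eq_2)
  have fj: "f (j+2) = (1-w) * (bb j w * x powr (-w - of_nat (Suc j)))" for j
  proof -
    have "of_nat (Suc (Suc j)) * ((1-w) gchoose Suc (Suc j)) = (1-w) * ((1 - w - 1) gchoose Suc j)"
      by (rule gbinomial_absorption)
    then have "((1-w) gchoose Suc (Suc j)) = (1-w) * ((-w) gchoose Suc j) / of_nat (Suc (Suc j))"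
      by (simp add: field_simps del: of_nat_Suc)
    moreover have e: "x powr (1 - w - of_nat (j+2)) = x powr (-w - of_nat (Suc j))"
      by (rule arg_cong[where f="\<lambda>e. x powr e"]) simp
    ultimately show ?thesis unfolding f_def bb_def e
      by (simp add: numeral_2_eq_2 del: of_nat_Suc)
  qed
  have w1: "1 - w \<noteq> 0" using w by simp
  have S4: "(\<lambda>j. bb j w * x powr (-w - of_nat (Suc j))) sums
     (((x+1) powr (1-w) - (x powr (1-w) + (1-w) * x powr (-w))) / (1-w))"
    using sums_divide[OF S3[unfolded s2 fj], of "1-w"] w1 by simp
  have "((x+1) powr (1-w) - (x powr (1-w) + (1-w) * x powr (-w))) / (1-w)
        = x powr (1-w)/(w-1) - (x+1) powr (1-w)/(w-1) - x powr (-w)"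
  proof -
    have gen: "\<And>A B C u::complex. u \<noteq> 0 \<Longrightarrow> (A - (B + u*C))/u = B/(-u) - A/(-u) - C"
      by (simp add: field_simps)
    have "w - 1 = -(1-w)" by simp
    then show ?thesis using gen[OF w1] by simp
  qed
  with S4 show ?thesis by simp
qed



lemma fubini_nat:
  fixes f :: "nat \<Rightarrow> nat \<Rightarrow> complex"
  assumes bnd: "\<And>n j. norm (f n j) \<le> a n * b j" and sa: "summable a" and sb: "summable b"
    and a0: "\<And>n. a n \<ge> 0" and b0: "\<And>j. b j \<ge> 0"
  shows "(\<lambda>n. \<Sum>j. f n j) sums (\<Sum>j. \<Sum>n. f n j)"
    and "\<And>n. summable (\<lambda>j. f n j)" and "\<And>j. summable (\<lambda>n. f n j)"
    and "(\<lambda>j. \<Sum>n. f n j) sums (\<Sum>j. \<Sum>n. f n j)"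
proof -
  show sj: "summable (\<lambda>j. f n j)" for n
    by (rule summable_norm_cancel, rule summable_comparison_test[OF _ summable_mult[OF sb, of "a n"]])
       (use bnd in auto)
  show sn: "summable (\<lambda>n. f n j)" for j
    by (rule summable_norm_cancel, rule summable_comparison_test[OF _ summable_mult2[OF sa, of "b j"]])
       (use bnd in auto)
  define g where "g = (\<lambda>(n::nat,j::nat). a n * b j)"
  have g1: "((\<lambda>j. g (n,j)) has_sum (a n * suminf b)) UNIV" for n
    unfolding g_def using sums_mult[OF summable_sums[OF sb], of "a n"] a0 b0
    by (intro sums_nonneg_imp_has_sum) (auto intro: mult_nonneg_nonneg)
  have g2: "(\<lambda>n. a n * suminf b) summable_on UNIV"
    using summable_mult2[OF sa, of "suminf b"] a0 b0 suminf_nonneg[OF sb]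
    by (subst summable_on_UNIV_nonneg_real_iff) (auto intro: mult_nonneg_nonneg)
  have gs: "g summable_on (Sigma UNIV (\<lambda>_. UNIV))"
    by (rule summable_on_SigmaI[OF g1 g2]) (auto simp: g_def intro: mult_nonneg_nonneg a0 b0)
  have gabs: "(\<lambda>x. norm (g x)) summable_on (UNIV \<times> UNIV)"
    using gs a0 b0 by (simp add: g_def case_prod_unfold abs_mult)
  define F where "F = (\<lambda>(n::nat,j::nat). f n j)"
  have Fabs: "(\<lambda>x. norm (F x)) summable_on (UNIV \<times> UNIV)"
    by (rule Infinite_Sum.abs_summable_on_comparison_test[OF gabs])
       (auto simp: F_def g_def case_prod_unfold bnd abs_mult a0 b0 intro: order.trans[OF bnd])
  then have "F summable_on (UNIV \<times> UNIV)" by (rule Infinite_Sum.abs_summable_summable)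
  then obtain S where S: "(F has_sum S) (UNIV \<times> UNIV)" by (auto simp: summable_on_def)
  have h1: "((\<lambda>j. F (n, j)) has_sum (\<Sum>j. f n j)) UNIV" for n
    unfolding F_def
    by (rule norm_summable_imp_has_sum, rule summable_comparison_test[OF _ summable_mult[OF sb, of "a n"]])
       (use bnd sj in \<open>auto simp: summable_sums\<close>)
  have A: "((\<lambda>n. \<Sum>j. f n j) has_sum S) UNIV"
    using has_sum_Sigma'[where f=F and a=S and A=UNIV and B="\<lambda>_. UNIV"] S h1 by auto
  have S': "((\<lambda>(j,n). F (n,j)) has_sum S) (UNIV \<times> UNIV)"
    using S has_sum_swap[where f=F and S=S and A=UNIV and B=UNIV] by (simp add: case_prod_unfold)
  have h2: "((\<lambda>n. (\<lambda>(j,n). F (n,j)) (j, n)) has_sum (\<Sum>n. f n j)) UNIV" for j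
    unfolding F_def
    by simp (rule norm_summable_imp_has_sum, rule summable_comparison_test[OF _ summable_mult2[OF sa, of "b j"]],
       use bnd sn in \<open>auto simp: summable_sums\<close>)
  have B: "((\<lambda>j. \<Sum>n. f n j) has_sum S) UNIV"
    using has_sum_Sigma'[where f="\<lambda>(j,n). F (n,j)" and a=S and A=UNIV and B="\<lambda>_. UNIV"] S' h2 by auto
  have "(\<lambda>j. \<Sum>n. f n j) sums S" using B by (rule has_sum_imp_sums)
  then have "S = (\<Sum>j. \<Sum>n. f n j)" by (simp add: sums_iff)
  then show "(\<lambda>j. \<Sum>n. f n j) sums (\<Sum>j. \<Sum>n. f n j)" using has_sum_imp_sums[OF B] by simp
  from \<open>S = _\<close> show "(\<lambda>n. \<Sum>j. f n j) sums (\<Sum>j. \<Sum>n. f n j)" using has_sum_imp_sums[OF A] by simp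
qed

definition Zs :: "complex \<Rightarrow> complex \<Rightarrow> complex" where
  "Zs D w = (\<Sum>n. (of_nat n + D) powr (-w))"
definition TT :: "complex \<Rightarrow> complex \<Rightarrow> complex" where
  "TT D w = D powr (1 - w) / (w - 1)"

lemma term_bound:
  fixes D y :: complex
  assumes D: "8 \<le> Re D" and y: "Re y \<le> 0"
  shows "norm ((of_nat n + D) powr y) \<le> (real n + 8) powr Re y * exp (\<bar>Im y\<bar> * pi/2)"
proof -
  have R: "0 < Re (of_nat n + D)" using D by simp
  have "real n + 8 \<le> Re (of_nat n + D)" using D by simp
  also have "\<dots> \<le> norm (of_nat n + D)" by (rule complex_Re_le_cmod)
  finally have N: "real n + 8 \<le> norm (of_nat n + D)" .
  have "norm ((of_nat n + D) powr y) \<le> norm (of_nat n + D) powr Re y * exp (\<bar>Im y\<bar> * pi/2)"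
    by (rule norm_powr_le[OF R])
  also have "\<dots> \<le> (real n + 8) powr Re y * exp (\<bar>Im y\<bar> * pi/2)"
    by (intro mult_right_mono powr_mono2' y N) auto
  finally show ?thesis .
qed

lemma summable_shift_powr:
  assumes "1 < \<sigma>"
  shows "summable (\<lambda>n. (real n + 8) powr (-\<sigma>))"
proof -
  have "summable (\<lambda>n. real n powr (-\<sigma>))" using assms by (simp add: summable_real_powr_iff)
  then have "summable (\<lambda>n. real (n + 8) powr (-\<sigma>))"
    by (subst summable_iff_shift[where f="\<lambda>n. real n powr (-\<sigma>)" and k=8])
  then show ?thesis by simp
qed

lemma Zs_summable:
  assumes D: "8 \<le> Re D" and w: "1 < Re w"
  shows "summable (\<lambda>n. (of_nat n + D) powr (-w))"
proof (rule summable_norm_cancel, rule summable_comparison_test)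
  show "summable (\<lambda>n. (real n + 8) powr (-Re w) * exp (\<bar>Im w\<bar> * pi/2))"
    by (intro summable_mult2 summable_shift_powr w)
  show "\<exists>N. \<forall>n\<ge>N. norm (norm ((of_nat n + D) powr (-w))) \<le> (real n + 8) powr (-Re w) * exp (\<bar>Im w\<bar> * pi/2)"
    using term_bound[OF D, of "-w"] w by auto
qed

lemma div_le_self_real: "0 \<le> (a::real) \<Longrightarrow> 1 \<le> c \<Longrightarrow> a / c \<le> a"
  using mult_left_mono[of 1 c a] by (simp add: divide_le_eq)

lemma bb_bound:
  assumes "norm w \<le> real \<rho>"
  shows "norm (bb j w) \<le> 2^\<rho> * 4^(Suc j)"
proof -
  have "norm (bb j w) = norm ((-w) gchoose Suc j) / real (Suc (Suc j))"
    unfolding bb_def by (simp add: norm_divide del: of_nat_Suc)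
  also have "\<dots> \<le> norm ((-w) gchoose Suc j)" by (rule div_le_self_real) auto
  also have "\<dots> \<le> 2^\<rho> * 4^(Suc j)" by (rule norm_gchoose_crude) (use assms in simp)
  finally show ?thesis .
qed

lemma pp_bound:
  assumes "norm w \<le> real \<rho>"
  shows "norm (pp j w) \<le> 2^\<rho> * 4^j"
proof -
  have "norm (pp j w) = norm ((-w) gchoose j) / real (Suc j * Suc (Suc j))"
    unfolding pp_def norm_divide norm_minus_cancel norm_of_nat ..
  also have "\<dots> \<le> norm ((-w) gchoose j)" 
  proof (rule div_le_self_real)
    have "1 \<le> Suc j * Suc (Suc j)" by (rule order_trans[OF _ mult_le_mono[of 1 "Suc j" 1 "Suc (Suc j)"]]) auto
    then show "1 \<le> real (Suc j * Suc (Suc j))" by (simp only: of_nat_le_iff[symmetric] of_nat_1)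
  qed simp
  also have "\<dots> \<le> 2^\<rho> * 4^j" by (rule norm_gchoose_crude) (use assms in simp)
  finally show ?thesis .
qed

lemma TT_tendsto:
  assumes D: "8 \<le> Re D" and w: "1 < Re w"
  shows "(\<lambda>n. (of_nat n + D) powr (1-w) / (w-1)) \<longlonglongrightarrow> 0"
proof (rule Lim_null_comparison)
  let ?E = "exp (\<bar>Im w\<bar> * pi/2) / norm (w - 1)"
  show "\<forall>\<^sub>F n in sequentially. norm ((of_nat n + D) powr (1-w) / (w-1)) \<le> (real n + 8) powr (1 - Re w) * ?E"
  proof (intro always_eventually allI)
    fix n
    have "norm ((of_nat n + D) powr (1-w)) \<le> (real n + 8) powr (1 - Re w) * exp (\<bar>Im w\<bar> * pi/2)"
    proof -
      have e1: "Re (1-w) = 1 - Re w" by simp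
      have e2: "\<bar>Im (1-w)\<bar> = \<bar>Im w\<bar>" by simp
      have "Re (1-w) \<le> 0" using w by simp
      from term_bound[OF D this, of n] show ?thesis unfolding e1 e2 .
    qed
    then have "norm ((of_nat n + D) powr (1-w)) / norm (w-1) \<le> (real n + 8) powr (1 - Re w) * exp (\<bar>Im w\<bar> * pi/2) / norm (w-1)"
      by (rule divide_right_mono) (rule norm_ge_zero)
    then show "norm ((of_nat n + D) powr (1-w) / (w-1)) \<le> (real n + 8) powr (1 - Re w) * ?E"
      by (simp only: norm_divide times_divide_eq_right)
  qed
  have "LIM n sequentially. 8 + real n :> at_top"
    by (rule filterlim_tendsto_add_at_top[OF tendsto_const filterlim_real_sequentially])
  then have "LIM n sequentially. real n + 8 :> at_top" by (simp only: add.commute)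
  then have "(\<lambda>n. (real n + 8) powr (1 - Re w)) \<longlonglongrightarrow> 0"
    by (rule tendsto_neg_powr[rotated]) (use w in simp)
  then show "(\<lambda>n. (real n + 8) powr (1 - Re w) * ?E) \<longlonglongrightarrow> 0"
    using tendsto_mult[OF _ tendsto_const, of "\<lambda>n. (real n + 8) powr (1 - Re w)" 0 sequentially ?E] by simp
qed



lemma Zs_identity:
  assumes D: "8 \<le> Re D" and w: "1 < Re w"
  shows "(\<lambda>j. bb j w * Zs D (w + of_nat (Suc j))) sums (TT D w - Zs D w)"
proof -
  define x where "x n = of_nat n + D" for n
  define g where "g n j = bb j w * x n powr (-w - of_nat (Suc j))" for n j
  have w1: "w \<noteq> 1" using w by auto
  have Rx: "1 < Re (x n)" for n using D by (simp add: x_def)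
  have xs: "x n + 1 = x (Suc n)" for n by (simp add: x_def)
  define T' where "T' y = y powr (1-w)/(w-1)" for y
  have P: "(\<lambda>j. g n j) sums (T' (x n) - T' (x (Suc n)) - x n powr (-w))" for n
    using point_identity[OF Rx w1, of n] unfolding g_def T'_def xs .
  obtain \<rho> :: nat where rho: "norm w \<le> real \<rho>" using real_arch_simple by blast
  define a where "a n = (real n + 8) powr (- Re w) * exp (\<bar>Im w\<bar> * pi/2)" for n
  define b where "b j = 2^\<rho> * 4^(Suc j) / (8::real)^(Suc j)" for j :: nat
  have bnd: "norm (g n j) \<le> a n * b j" for n j
  proof -
    have t: "norm (x n powr (-w - of_nat (Suc j))) \<le> (real n + 8) powr (Re (-w - of_nat (Suc j))) * exp(\<bar>Im (-w - of_nat (Suc j))\<bar> * pi/2)"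
      unfolding x_def by (rule term_bound[OF D]) (use w in simp)
    have e1: "Re (-w - of_nat (Suc j)) = - Re w - real (Suc j)" by simp
    have e2: "\<bar>Im (-w - of_nat (Suc j))\<bar> = \<bar>Im w\<bar>" by simp
    have p: "(real n + 8) powr (- Re w - real (Suc j)) = (real n + 8) powr (- Re w) / (real n + 8)^(Suc j)"
      by (simp add: powr_diff powr_realpow del: of_nat_Suc)
    have q: "(real n + 8) powr (- Re w) / (real n + 8)^(Suc j) \<le> (real n + 8) powr (- Re w) / 8^(Suc j)"
      by (intro divide_left_mono power_mono mult_pos_pos) auto
    have r: "norm (x n powr (-w - of_nat (Suc j))) \<le> (real n + 8) powr (- Re w) / 8^(Suc j) * exp(\<bar>Im w\<bar> * pi/2)"
      using t mult_right_mono[OF q exp_ge_zero[of "\<bar>Im w\<bar> * pi/2"]] unfolding e1 e2 p by linarith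
    have "norm (g n j) = norm (bb j w) * norm (x n powr (-w - of_nat (Suc j)))"
      by (simp add: g_def norm_mult)
    also have "\<dots> \<le> (2^\<rho> * 4^(Suc j)) * ((real n + 8) powr (- Re w) / 8^(Suc j) * exp(\<bar>Im w\<bar> * pi/2))"
      by (intro mult_mono bb_bound rho r) auto
    also have "\<dots> = a n * b j" by (simp add: a_def b_def)
    finally show ?thesis .
  qed
  have sa: "summable a" unfolding a_def using w by (intro summable_mult2 summable_shift_powr) simp
  have bg: "b j = 2^\<rho> * (1/2) * (1/2)^j" for j
  proof -
    have h: "(4::real)^Suc j / 8^Suc j = (1/2)^Suc j" by (simp only: power_divide[symmetric]) simp
    have "b j = 2^\<rho> * ((4::real)^Suc j / 8^Suc j)" by (simp add: b_def)
    then show ?thesis unfolding h by simp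
  qed
  have sb: "summable b" unfolding bg by (intro summable_mult summable_geometric) simp
  have a0: "a n \<ge> 0" for n by (simp add: a_def)
  have b0: "b j \<ge> 0" for j by (simp add: b_def)
  note F = fubini_nat[of g a b, OF bnd sa sb a0 b0]
  have col: "(\<Sum>n. g n j) = bb j w * Zs D (w + of_nat (Suc j))" for j
  proof -
    have e: "-w - of_nat (Suc j) = -(w + of_nat (Suc j))" by simp
    have s: "summable (\<lambda>n. (of_nat n + D) powr (-(w + of_nat (Suc j))))"
      by (rule Zs_summable[OF D]) (use w in simp)
    show ?thesis unfolding g_def x_def e Zs_def by (rule suminf_mult[OF s])
  qed
  have tel: "(\<lambda>n. T' (x n) - T' (x (Suc n))) sums (T' (x 0) - 0)"
    by (rule telescope_sums') (unfold T'_def x_def, rule TT_tendsto[OF D w])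
  have rowsum: "(\<Sum>j. g n j) = T' (x n) - T' (x (Suc n)) - x n powr (-w)" for n
    using P[of n] by (simp add: sums_iff)
  have "(\<lambda>n. (T' (x n) - T' (x (Suc n))) - (\<Sum>j. g n j)) sums (T' (x 0) - 0 - (\<Sum>j. \<Sum>n. g n j))"
    by (rule sums_diff[OF tel F(1)])
  then have "(\<lambda>n. x n powr (-w)) sums (T' (x 0) - (\<Sum>j. \<Sum>n. g n j))"
    unfolding rowsum by simp
  then have Z: "Zs D w = TT D w - (\<Sum>j. \<Sum>n. g n j)"
    unfolding Zs_def TT_def by (simp add: sums_iff x_def T'_def)
  show ?thesis using F(4) unfolding col Z by simp
qed



definition Op :: "complex \<Rightarrow> (complex \<Rightarrow> complex) \<Rightarrow> complex \<Rightarrow> complex" where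
  "Op D G w = - (\<Sum>j. pp j w * D powr (1 - w - of_nat (Suc j)) + bb j w * G (w + of_nat (Suc j)))"

primrec Rm :: "complex \<Rightarrow> nat \<Rightarrow> complex \<Rightarrow> complex" where
  "Rm D 0 = (\<lambda>w. Zs D w - TT D w)"
| "Rm D (Suc m) = Op D (Rm D m)"

lemma bb_TT:
  assumes "w + of_nat j \<noteq> 0"
  shows "bb j w * TT D (w + of_nat (Suc j)) = pp j w * D powr (1 - w - of_nat (Suc j))"
proof -
  have e1: "w + of_nat (Suc j) - 1 = w + of_nat j" by simp
  have e2: "1 - (w + of_nat (Suc j)) = 1 - w - of_nat (Suc j)" by simp
  have gen: "\<And>G u a b P :: complex. u \<noteq> 0 \<Longrightarrow> a \<noteq> 0 \<Longrightarrow> b \<noteq> 0 \<Longrightarrow>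
      G * (-u) / a / b * (P / u) = - G / (a * b) * P"
    by (simp add: field_simps)
  have e3: "-w - of_nat j = -(w + of_nat j)" by simp
  have "bb j w = ((-w) gchoose j) * (-(w + of_nat j)) / of_nat (Suc j) / of_nat (Suc (Suc j))"
    unfolding bb_def gch_Suc e3 ..
  moreover have "pp j w = - ((-w) gchoose j) / (of_nat (Suc j) * of_nat (Suc (Suc j)))"
    unfolding pp_def of_nat_mult ..
  ultimately show ?thesis unfolding TT_def e1 e2
    using gen[OF assms, of "of_nat (Suc j)" "of_nat (Suc (Suc j))" "(-w) gchoose j" "D powr (1 - w - of_nat (Suc j))"]
    by (simp only: of_nat_eq_0_iff Suc_neq_Zero not_False_eq_True)
qed

lemma Op_R0:
  assumes D: "8 \<le> Re D" and w: "1 < Re w"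
  shows "Op D (Rm D 0) w = Rm D 0 w"
proof -
  have "pp j w * D powr (1 - w - of_nat (Suc j)) + bb j w * Rm D 0 (w + of_nat (Suc j))
        = bb j w * Zs D (w + of_nat (Suc j))" for j
  proof -
    have "Re (w + of_nat j) > 0" using w by simp
    then have "w + of_nat j \<noteq> 0" by (metis less_irrefl zero_complex.sel(1))
    then show ?thesis using bb_TT[of w j D] by (simp add: algebra_simps)
  qed
  then have "Op D (Rm D 0) w = - (\<Sum>j. bb j w * Zs D (w + of_nat (Suc j)))"
    unfolding Op_def by simp
  also have "\<dots> = Rm D 0 w" using Zs_identity[OF D w] by (simp add: sums_iff)
  finally show ?thesis .
qed

lemma Rm_Suc_eq:
  assumes D: "8 \<le> Re D"
  shows "1 - real m < Re w \<Longrightarrow> Rm D (Suc m) w = Rm D m w"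
proof (induction m arbitrary: w)
  case 0
  then show ?case using Op_R0[OF D, of w] by simp
next
  case (Suc m)
  have "Rm D (Suc m) (w + of_nat (Suc j)) = Rm D m (w + of_nat (Suc j))" for j
    by (rule Suc.IH) (use Suc.prems in simp)
  then show ?case by (simp add: Op_def)
qed

lemma Rm_eq:
  assumes D: "8 \<le> Re D" and w: "1 - real m < Re w"
  shows "m \<le> m' \<Longrightarrow> Rm D m' w = Rm D m w"
proof (induction m' rule: dec_induct)
  case base then show ?case by simp
next
  case (step k)
  have "1 - real k < Re w" using w step.hyps(1) by linarith
  then show ?case using Rm_Suc_eq[OF D] step.IH by simp
qed

definition mw :: "complex \<Rightarrow> nat" where
  "mw w = nat \<lceil>1 - Re w\<rceil> + 1"

definition RR :: "complex \<Rightarrow> complex \<Rightarrow> complex" where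
  "RR D w = Rm D (mw w) w"

lemma mw_ok: "1 - real (mw w) < Re w"
  unfolding mw_def by (smt (verit, ccfv_SIG) of_nat_1 of_nat_add real_nat_ceiling_ge)

lemma RR_eq:
  assumes D: "8 \<le> Re D" and w: "1 - real m < Re w"
  shows "RR D w = Rm D m w"
proof -
  have "Rm D (max m (mw w)) w = Rm D m w" by (rule Rm_eq[OF D w]) simp
  moreover have "Rm D (max m (mw w)) w = Rm D (mw w) w" by (rule Rm_eq[OF D mw_ok]) simp
  ultimately show ?thesis unfolding RR_def by simp
qed

lemma RR_rec:
  assumes D: "8 \<le> Re D"
  shows "RR D w = Op D (RR D) w"
proof -
  have "RR D w = Rm D (Suc (mw w)) w" by (rule RR_eq[OF D]) (use mw_ok[of w] in simp)
  also have "\<dots> = Op D (Rm D (mw w)) w" by simp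
  also have "\<dots> = Op D (RR D) w"
  proof -
    have "Rm D (mw w) (w + of_nat (Suc j)) = RR D (w + of_nat (Suc j))" for j
      by (rule RR_eq[OF D, symmetric]) (use mw_ok[of w] in simp)
    then show ?thesis by (simp add: Op_def)
  qed
  finally show ?thesis .
qed

lemma RR_R0:
  assumes D: "8 \<le> Re D" and w: "1 < Re w"
  shows "RR D w = Zs D w - TT D w"
  using RR_eq[OF D, of 0 w] w by simp



lemma half_pow: "(4::real)^j * (1/8)^j = (1/2)^j"
  by (simp add: power_mult_distrib[symmetric])

lemma Dpow_bound:
  assumes D: "8 \<le> Re D" and w: "norm w \<le> real \<rho>"
  shows "norm (D powr (1 - w - of_nat (Suc j))) \<le> norm D powr \<rho> * exp (\<rho>*pi/2) * (1/8)^j"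
proof -
  have RD: "0 < Re D" using D by simp
  have nD: "8 \<le> norm D" using D complex_Re_le_cmod[of D] by linarith
  have e1: "Re (1 - w - of_nat (Suc j)) = - Re w - real j" by simp
  have e2: "\<bar>Im (1 - w - of_nat (Suc j))\<bar> = \<bar>Im w\<bar>" by simp
  have Re: "- Re w \<le> \<rho>" using w abs_Re_le_cmod[of w] by linarith
  have Im: "\<bar>Im w\<bar> \<le> \<rho>" using w abs_Im_le_cmod[of w] by linarith
  have pj: "norm D powr real j = norm D ^ j" by (rule powr_realpow) (use nD in linarith)
  have "norm (D powr (1 - w - of_nat (Suc j))) \<le> norm D powr (- Re w - real j) * exp (\<bar>Im w\<bar> * pi / 2)"
    using norm_powr_le[OF RD, of "1 - w - of_nat (Suc j)"] unfolding e1 e2 .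
  also have "norm D powr (- Re w - real j) = norm D powr (- Re w) / norm D ^ j"
    by (simp add: powr_diff pj)
  also have "\<dots> \<le> norm D powr \<rho> / 8 ^ j"
    by (intro frac_le powr_mono Re power_mono) (use nD in auto)
  also have "norm D powr \<rho> / 8 ^ j = norm D powr \<rho> * (1/8)^j" by (simp add: power_divide)
  finally have "norm (D powr (1 - w - of_nat (Suc j))) \<le> norm D powr \<rho> * (1/8)^j * exp (\<bar>Im w\<bar> * pi / 2)"
    by (simp add: mult_right_mono)
  also have "\<dots> \<le> norm D powr \<rho> * (1/8)^j * exp (\<rho> * pi / 2)"
    by (intro mult_left_mono) (use Im in auto)
  finally show ?thesis by (simp add: mult_ac)
qed

lemma pp_part:
  assumes D: "8 \<le> Re D" and w: "norm w \<le> real \<rho>"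
  shows "norm (pp j w * D powr (1 - w - of_nat (Suc j))) \<le> 2^\<rho> * norm D powr \<rho> * exp (\<rho>*pi/2) * (1/2)^j"
proof -
  have "norm (pp j w * D powr (1 - w - of_nat (Suc j))) \<le> (2^\<rho> * 4^j) * (norm D powr \<rho> * exp (\<rho>*pi/2) * (1/8)^j)"
    unfolding norm_mult by (intro mult_mono pp_bound[OF w] Dpow_bound[OF D w]) auto
  also have "\<dots> = 2^\<rho> * norm D powr \<rho> * exp (\<rho>*pi/2) * (4^j * (1/8)^j)" by (simp add: mult_ac)
  finally show ?thesis unfolding half_pow .
qed

lemma bb_part:
  assumes w: "norm w \<le> real \<rho>"
    and G: "norm (G (w + of_nat (Suc j))) \<le> M * 8 powr (- Re (w + of_nat (Suc j)))"
  shows "norm (bb j w * G (w + of_nat (Suc j))) \<le> 2^\<rho> * 4 * M * 8 powr \<rho> * (1/2)^j"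
proof -
  have M0: "0 \<le> M" using G by (smt (verit) norm_ge_zero powr_gt_zero zero_le_mult_iff)
  have Re: "- Re w \<le> \<rho>" using w abs_Re_le_cmod[of w] by linarith
  have "8 powr (- Re (w + of_nat (Suc j))) = 8 powr (- Re w) / 8 ^ Suc j"
    by (simp add: powr_diff powr_realpow del: of_nat_Suc)
  also have "\<dots> \<le> 8 powr \<rho> / 8 ^ Suc j" by (intro divide_right_mono powr_mono Re) auto
  finally have p: "8 powr (- Re (w + of_nat (Suc j))) \<le> 8 powr \<rho> * (1/8) * (1/8)^j"
    by (simp add: power_divide)
  have "norm (bb j w * G (w + of_nat (Suc j))) \<le> (2^\<rho> * 4^Suc j) * (M * (8 powr \<rho> * (1/8) * (1/8)^j))"
  proof -
    have g2: "norm (G (w + of_nat (Suc j))) \<le> M * (8 powr \<rho> * (1/8) * (1/8)^j)"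
      using order.trans[OF G mult_left_mono[OF p M0]] .
    show ?thesis unfolding norm_mult by (intro mult_mono bb_bound[OF w] g2) auto
  qed
  also have "\<dots> = 2^\<rho> * M * 8 powr \<rho> * (1/2) * (4^j * (1/8)^j)" by (simp add: mult_ac)
  also have "\<dots> \<le> 2^\<rho> * 4 * M * 8 powr \<rho> * (1/2)^j" unfolding half_pow using M0 by simp
  finally show ?thesis .
qed

definition S2 :: real where "S2 = (\<Sum>n. (real n + 8) powr (-2))"

lemma R0_bound:
  assumes D: "8 \<le> Re D" and u: "2 \<le> Re u" and B: "\<bar>Im u\<bar> \<le> B"
  shows "norm (Zs D u - TT D u) \<le> (64 * S2 + 8) * exp (B*pi/2) * 8 powr (- Re u)"
proof -
  let ?E = "exp (B*pi/2)"
  have s2: "summable (\<lambda>n. (real n + 8) powr (-2))" using summable_shift_powr[of 2] by simp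
  have tb: "norm ((of_nat n + D) powr (-u)) \<le> 64 * (real n + 8) powr (-2) * ?E * 8 powr (- Re u)" for n
  proof -
    have "norm ((of_nat n + D) powr (-u)) \<le> (real n + 8) powr (- Re u) * exp (\<bar>Im u\<bar> * pi/2)"
      using term_bound[OF D, of "-u" n] u by simp
    also have "\<dots> \<le> (real n + 8) powr (- Re u) * ?E"
      by (intro mult_left_mono) (use B in auto)
    also have "(real n + 8) powr (- Re u) = (real n + 8) powr (-2) * (real n + 8) powr (-(Re u - 2))"
      by (simp add: powr_add[symmetric])
    also have "(real n + 8) powr (-(Re u - 2)) \<le> 8 powr (-(Re u - 2))"
      by (rule powr_mono2') (use u in auto)
    also have "8 powr (-(Re u - 2)) = 64 * 8 powr (- Re u)"
      by (simp add: powr_add powr_diff powr_minus_divide)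
    finally show ?thesis by (simp add: mult_ac mult_left_mono)
  qed
  have Z: "norm (Zs D u) \<le> 64 * S2 * ?E * 8 powr (- Re u)"
  proof -
    have "norm (Zs D u) \<le> (\<Sum>n. 64 * (real n + 8) powr (-2) * ?E * 8 powr (- Re u))"
      unfolding Zs_def by (rule norm_suminf_le[OF tb]) (intro summable_mult2 summable_mult s2)
    also have "\<dots> = 64 * S2 * ?E * 8 powr (- Re u)"
    proof -
      have "(\<Sum>n. 64 * (real n + 8) powr (-2) * ?E * 8 powr (- Re u)) = (\<Sum>n. (real n + 8) powr (-2) * (64 * ?E * 8 powr (- Re u)))"
        by (simp add: mult_ac)
      also have "\<dots> = S2 * (64 * ?E * 8 powr (- Re u))"
        unfolding S2_def by (rule suminf_mult2[OF s2, symmetric])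
      finally show ?thesis by (simp add: mult_ac)
    qed
    finally show ?thesis .
  qed
  have T: "norm (TT D u) \<le> 8 * ?E * 8 powr (- Re u)"
  proof -
    have RD: "0 < Re D" using D by simp
    have nD: "8 \<le> norm D" using D complex_Re_le_cmod[of D] by linarith
    have "norm (D powr (1-u)) \<le> norm D powr (1 - Re u) * exp (\<bar>Im u\<bar> * pi/2)"
      using norm_powr_le[OF RD, of "1-u"] by simp
    also have "\<dots> \<le> 8 powr (1 - Re u) * ?E"
      by (intro mult_mono powr_mono2') (use u nD B in auto)
    also have "8 powr (1 - Re u) = 8 * 8 powr (- Re u)" by (simp add: powr_diff powr_minus_divide)
    finally have n1: "norm (D powr (1-u)) \<le> 8 * ?E * 8 powr (- Re u)" by (simp add: mult_ac)
    have n2: "1 \<le> norm (u - 1)" using abs_Re_le_cmod[of "u-1"] u by simp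
    have "norm (TT D u) = norm (D powr (1-u)) / norm (u - 1)" by (simp add: TT_def norm_divide)
    also have "\<dots> \<le> norm (D powr (1-u))" by (rule div_le_self_real[OF norm_ge_zero n2])
    finally show ?thesis using n1 by linarith
  qed
  have "norm (Zs D u - TT D u) \<le> norm (Zs D u) + norm (TT D u)" by (rule norm_triangle_ineq4)
  also have "\<dots> \<le> (64 * S2 + 8) * ?E * 8 powr (- Re u)" using Z T by (simp add: algebra_simps)
  finally show ?thesis .
qed



lemma open_Re_gt: "open {w::complex. c < Re w}"
  by (intro open_Collect_less continuous_intros)

lemma gchoose_holo: "(\<lambda>w::complex. (-w) gchoose j) holomorphic_on A"
  unfolding gbinomial_prod_rev by (intro holomorphic_intros) simp

lemma holo_series:
  fixes f :: "nat \<Rightarrow> complex \<Rightarrow> complex"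
  assumes S: "open S" and hol: "\<And>i. f i holomorphic_on S"
    and bnd: "\<And>x. x \<in> S \<Longrightarrow> \<exists>d>0. cball x d \<subseteq> S \<and>
                (\<exists>M N. summable M \<and> (\<forall>i\<ge>N. \<forall>w\<in>cball x d. norm (f i w) \<le> M i))"
  shows "(\<lambda>w. \<Sum>i. f i w) holomorphic_on S"
proof (rule holomorphic_uniform_sequence[OF S])
  show "(\<lambda>w. \<Sum>i<n. f i w) holomorphic_on S" for n
    by (intro holomorphic_intros hol)
  fix x assume "x \<in> S"
  from bnd[OF this] obtain d M N where d: "0 < d" "cball x d \<subseteq> S" "summable M"
    and b: "\<And>i w. i \<ge> N \<Longrightarrow> w \<in> cball x d \<Longrightarrow> norm (f i w) \<le> M i" by blast
  have "uniform_limit (cball x d) (\<lambda>n w. \<Sum>i<n. f i w) (\<lambda>w. \<Sum>i. f i w) sequentially"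
    by (rule Weierstrass_m_test_ev[OF _ d(3)]) (unfold eventually_sequentially, use b in blast)
  then show "\<exists>d>0. cball x d \<subseteq> S \<and> uniform_limit (cball x d) (\<lambda>n w. \<Sum>i<n. f i w) (\<lambda>w. \<Sum>i. f i w) sequentially"
    using d by blast
qed

lemma cball_Re_Im:
  assumes "w \<in> cball x d"
  shows "Re x - d \<le> Re w" "\<bar>Im w\<bar> \<le> \<bar>Im x\<bar> + d" "norm w \<le> norm x + d"
proof -
  have n: "norm (w - x) \<le> d" using assms by (simp add: dist_norm norm_minus_commute)
  show "Re x - d \<le> Re w" using abs_Re_le_cmod[of "w - x"] n by simp
  show "\<bar>Im w\<bar> \<le> \<bar>Im x\<bar> + d" using abs_Im_le_cmod[of "w - x"] n by simp
  show "norm w \<le> norm x + d" using norm_triangle_ineq2[of w x] n by simp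
qed

lemma Zs_holo:
  assumes D: "8 \<le> Re D"
  shows "Zs D holomorphic_on {w. 1 < Re w}"
proof -
  have "(\<lambda>w. \<Sum>n. (of_nat n + D) powr (-w)) holomorphic_on {w. 1 < Re w}"
  proof (rule holo_series[OF open_Re_gt])
    show "(\<lambda>w. (of_nat n + D) powr (-w)) holomorphic_on {w. 1 < Re w}" for n
      by (intro holomorphic_intros)
    fix x assume x: "x \<in> {w. 1 < Re w}"
    define d where "d = (Re x - 1)/2"
    have d0: "0 < d" using x by (simp add: d_def)
    have sub: "cball x d \<subseteq> {w. 1 < Re w}"
    proof
      fix w assume "w \<in> cball x d"
      then have "Re x - d \<le> Re w" by (rule cball_Re_Im)
      moreover have "d < Re x - 1" using x by (simp add: d_def)
      ultimately show "w \<in> {w. 1 < Re w}" by simp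
    qed
    define M where "M n = (real n + 8) powr (-(1+d)) * exp ((\<bar>Im x\<bar> + d) * pi/2)" for n
    have sM: "summable M" unfolding M_def using d0 by (intro summable_mult2 summable_shift_powr) simp
    have "norm ((of_nat n + D) powr (-w)) \<le> M n" if w: "w \<in> cball x d" for n w
    proof -
      have "norm ((of_nat n + D) powr (-w)) \<le> (real n + 8) powr (- Re w) * exp (\<bar>Im w\<bar> * pi/2)"
      proof -
        have "d < Re x - 1" using x by (simp add: d_def)
        then have "0 \<le> Re w" using cball_Re_Im(1)[OF w] by linarith
        then show ?thesis using term_bound[OF D, of "-w" n] by simp
      qed
      also have "\<dots> \<le> M n" unfolding M_def
      proof (intro mult_mono powr_mono)
        have "Re x - d = 1 + d" by (simp add: d_def field_simps)
        then show "- Re w \<le> - (1 + d)" using cball_Re_Im(1)[OF w] by linarith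
        have "\<bar>Im w\<bar> * pi / 2 \<le> (\<bar>Im x\<bar> + d) * pi / 2"
          using cball_Re_Im(2)[OF w] by (intro divide_right_mono mult_right_mono) auto
        then show "exp (\<bar>Im w\<bar> * pi / 2) \<le> exp ((\<bar>Im x\<bar> + d) * pi / 2)" by simp
      qed auto
      finally show ?thesis .
    qed
    then show "\<exists>d>0. cball x d \<subseteq> {w. 1 < Re w} \<and> (\<exists>M N. summable M \<and>
            (\<forall>i\<ge>N. \<forall>w\<in>cball x d. norm ((of_nat i + D) powr (-w)) \<le> M i))"
      using d0 sub sM by blast
  qed
  then show ?thesis by (simp add: Zs_def[abs_def])
qed

lemma Rm_holo:
  assumes D: "8 \<le> Re D"
  shows "Rm D m holomorphic_on {w. 1 - real m < Re w}"
proof (induction m)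
  case 0
  have "TT D holomorphic_on {w. 1 < Re w}"
    unfolding TT_def[abs_def] by (intro holomorphic_intros) auto
  then show ?case using Zs_holo[OF D] by (simp add: holomorphic_on_diff)
next
  case (Suc m)
  let ?S = "{w. 1 - real (Suc m) < Re w}"
  define h where "h j w = pp j w * D powr (1 - w - of_nat (Suc j)) + bb j w * Rm D m (w + of_nat (Suc j))" for j w
  have "(\<lambda>w. \<Sum>j. h j w) holomorphic_on ?S"
  proof (rule holo_series[OF open_Re_gt])
    show "h j holomorphic_on ?S" for j
    proof -
      have c: "(\<lambda>w. Rm D m (w + of_nat (Suc j))) holomorphic_on ?S"
        using holomorphic_on_compose_gen[of "\<lambda>w. w + of_nat (Suc j)" ?S "Rm D m" "{w. 1 - real m < Re w}"]
          Suc.IH by (force simp: o_def intro: holomorphic_intros)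
      show ?thesis unfolding h_def pp_def bb_def
        by (intro holomorphic_intros gchoose_holo c) auto
    qed
    fix x assume x: "x \<in> ?S"
    define d where "d = (Re x + real m)/2"
    have d0: "0 < d" using x by (simp add: d_def)
    have sub: "cball x d \<subseteq> ?S"
    proof
      fix w assume "w \<in> cball x d"
      then have "Re x - d \<le> Re w" by (rule cball_Re_Im)
      moreover have "d < Re x + real m" using x by (simp add: d_def)
      ultimately show "w \<in> ?S" by simp
    qed
    define \<rho> where "\<rho> = nat \<lceil>norm x + d\<rceil>"
    have rho: "norm w \<le> real \<rho>" if "w \<in> cball x d" for w
      using cball_Re_Im(3)[OF that] unfolding \<rho>_def by linarith
    define K where "K = (64 * S2 + 8) * exp (\<rho>*pi/2)"
    define M where "M j = (2^\<rho> * norm D powr \<rho> * exp (\<rho>*pi/2) + 2^\<rho> * 4 * K * 8 powr \<rho>) * (1/2)^j" for j :: nat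
    have sM: "summable M" unfolding M_def by (intro summable_mult summable_geometric) simp
    have "norm (h j w) \<le> M j" if j: "j \<ge> \<rho> + 1" and w: "w \<in> cball x d" for j w
    proof -
      have nw: "norm w \<le> real \<rho>" by (rule rho[OF w])
      have Rew: "2 \<le> Re (w + of_nat (Suc j))"
        using abs_Re_le_cmod[of w] nw j by simp
      have Imw: "\<bar>Im (w + of_nat (Suc j))\<bar> \<le> real \<rho>"
        using abs_Im_le_cmod[of w] nw by simp
      have "Rm D m (w + of_nat (Suc j)) = Rm D 0 (w + of_nat (Suc j))"
        by (rule Rm_eq[OF D]) (use Rew in auto)
      then have G: "norm (Rm D m (w + of_nat (Suc j))) \<le> K * 8 powr (- Re (w + of_nat (Suc j)))"
        using R0_bound[OF D Rew Imw] by (simp add: K_def)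
      have "norm (h j w) \<le> norm (pp j w * D powr (1 - w - of_nat (Suc j))) + norm (bb j w * Rm D m (w + of_nat (Suc j)))"
        unfolding h_def by (rule norm_triangle_ineq)
      also have "\<dots> \<le> 2^\<rho> * norm D powr \<rho> * exp (\<rho>*pi/2) * (1/2)^j + 2^\<rho> * 4 * K * 8 powr \<rho> * (1/2)^j"
        by (intro add_mono pp_part[OF D nw] bb_part[where G="Rm D m", OF nw G])
      also have "\<dots> = M j" by (simp add: M_def algebra_simps)
      finally show ?thesis .
    qed
    then show "\<exists>d>0. cball x d \<subseteq> ?S \<and> (\<exists>M N. summable M \<and> (\<forall>i\<ge>N. \<forall>w\<in>cball x d. norm (h i w) \<le> M i))"
      using d0 sub sM by blast
  qed
  then have "(\<lambda>w. - (\<Sum>j. h j w)) holomorphic_on ?S" by (rule holomorphic_on_minus)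
  then show ?case by (simp add: Op_def[abs_def] h_def)
qed

lemma RR_holo:
  assumes D: "8 \<le> Re D"
  shows "RR D holomorphic_on UNIV"
  unfolding holomorphic_on_def
proof
  fix x :: complex
  let ?S = "{w. 1 - real (mw x) < Re w}"
  have "RR D holomorphic_on ?S"
    by (rule holomorphic_transform[OF Rm_holo[OF D, of "mw x"]]) (use RR_eq[OF D] in auto)
  then have "RR D field_differentiable (at x)"
    by (rule holomorphic_on_imp_differentiable_at[OF _ open_Re_gt]) (use mw_ok in simp)
  then show "RR D field_differentiable (at x within UNIV)" by simp
qed



definition Hf :: "complex \<Rightarrow> complex \<Rightarrow> complex" where
  "Hf d w = (if w = 1 then 0 else (\<Sum>n<8. (of_nat n + d) powr (-w)) + TT (d + 8) w + RR (d + 8) w)"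

lemma hurwitz_eq:
  assumes d: "0 < Re d"
  shows "hurwitz_zeta s d = Hf d s"
proof -
  define D where "D = d + 8"
  have D8: "8 \<le> Re D" using d by (simp add: D_def)
  define P where "P f \<longleftrightarrow> f holomorphic_on (UNIV - {1}) \<and> f 1 = 0 \<and>
        (\<forall>z. 1 < Re z \<longrightarrow> f z = (\<Sum>n. (of_nat n + d) powr (- z)))" for f
  have ser: "(\<Sum>n. (of_nat n + d) powr (- z)) = Hf d z" if z: "1 < Re z" for z
  proof -
    have z1: "z \<noteq> 1" using z by auto
    have "(\<lambda>i. (of_nat (i + 8) + d) powr (-z)) = (\<lambda>i. (of_nat i + D) powr (-z))"
      by (simp add: D_def add_ac)
    moreover have "(\<lambda>i. (of_nat i + D) powr (-z)) sums Zs D z"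
      unfolding Zs_def by (rule summable_sums[OF Zs_summable[OF D8 z]])
    ultimately have "(\<lambda>i. (of_nat (i + 8) + d) powr (-z)) sums Zs D z" by simp
    then have "(\<lambda>n. (of_nat n + d) powr (-z)) sums (Zs D z + (\<Sum>n<8. (of_nat n + d) powr (-z)))"
      by (subst (asm) sums_iff_shift[where f="\<lambda>n. (of_nat n + d) powr (-z)"])
    then have "(\<Sum>n. (of_nat n + d) powr (- z)) = Zs D z + (\<Sum>n<8. (of_nat n + d) powr (-z))"
      by (simp add: sums_iff)
    also have "Zs D z = TT D z + RR D z" using RR_R0[OF D8 z] by simp
    finally show ?thesis using z1 by (simp add: Hf_def D_def)
  qed
  have hol: "Hf d holomorphic_on (UNIV - {1})"
  proof (rule holomorphic_transform)
    show "(\<lambda>w. (\<Sum>n<8. (of_nat n + d) powr (-w)) + TT D w + RR D w) holomorphic_on (UNIV - {1})"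
      unfolding TT_def using RR_holo[OF D8]
      by (intro holomorphic_intros) (auto intro: holomorphic_on_subset)
  qed (simp add: Hf_def D_def)
  have PH: "P (Hf d)" unfolding P_def using hol ser by (simp add: Hf_def)
  have uniq: "g = Hf d" if "P g" for g
  proof
    fix w
    show "g w = Hf d w"
    proof (cases "w = 1")
      case True then show ?thesis using \<open>P g\<close> by (simp add: P_def Hf_def)
    next
      case False
      have o1: "open {z. 1 < Re z}" by (rule open_Re_gt)
      have o2: "open (UNIV - {1::complex})" by (simp add: open_Diff)
      have ne: "{z. 1 < Re z} \<noteq> {}" by (auto intro!: exI[of _ 2])
      have "connected (- {1::complex})" by (rule connected_punctured_universe) simp
      then have co: "connected (UNIV - {1::complex})" by (simp add: Compl_eq_Diff_UNIV)
      have su: "{z. 1 < Re z} \<subseteq> UNIV - {1}" by auto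
      have hg: "g holomorphic_on (UNIV - {1})" using \<open>P g\<close> by (simp add: P_def)
      have eq: "\<And>z. z \<in> {z. 1 < Re z} \<Longrightarrow> g z = Hf d z"
        using \<open>P g\<close> ser by (simp add: P_def)
      have wi: "w \<in> UNIV - {1}" using False by simp
      show ?thesis by (rule analytic_continuation_open[OF o1 o2 ne co su hg hol eq wi])
    qed
  qed
  have "(THE f. P f) = Hf d" by (rule the_equality[where P=P, OF PH uniq])
  then show ?thesis unfolding hurwitz_zeta_def P_def[symmetric] by simp
qed



lemma Op_norm_le:
  assumes "\<And>j. norm (pp j w * D powr (1 - w - of_nat (Suc j)) + bb j w * G (w + of_nat (Suc j))) \<le> g j"
    and "summable g"
  shows "norm (Op D G w) \<le> suminf g"
  unfolding Op_def norm_minus_cancel by (rule norm_suminf_le[OF assms])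

lemma geom_half_sum: "(\<Sum>j. c * (1/2::real)^j) = 2 * c"
  using suminf_geometric[of "1/2::real"] summable_geometric[of "1/2::real"]
  by (simp add: suminf_mult)

lemma summable_half: "summable (\<lambda>j. c * (1/2::real)^j)"
  by (intro summable_mult summable_geometric) simp

lemma pow_le_exp_fact:
  assumes "0 \<le> (x::real)"
  shows "x^n \<le> exp x * fact n"
proof -
  have s: "(\<lambda>n. x^n /\<^sub>R fact n) sums exp x" by (rule exp_converges)
  have "x^n /\<^sub>R fact n \<le> exp x"
    using sum_le_suminf[OF sums_summable[OF s], of "{n}"] assms s
    by (simp add: sums_iff)
  then show ?thesis by (simp add: divide_simps)
qed

lemma inv_fact_le: "1 / fact (j+2) \<le> (1/2) * (1/3::real)^j"
proof (induction j)
  case 0 then show ?case by simp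
next
  case (Suc j)
  have "fact (Suc j + 2) = real (j + 3) * fact (j+2)" by (simp add: algebra_simps)
  then have "1 / fact (Suc j + 2) = (1 / real (j+3)) * (1 / fact (j+2))" by simp
  also have "\<dots> \<le> (1/3) * ((1/2) * (1/3::real)^j)"
    by (intro mult_mono Suc.IH) (auto simp: divide_simps)
  finally show ?case by simp
qed

lemma inv_fact_sum: "(\<Sum>j<k. 1 / fact (j+2)) \<le> (3/4::real)"
proof -
  have "(\<Sum>j<k. 1 / fact (j+2)) \<le> (\<Sum>j<k. (1/2) * (1/3::real)^j)"
    by (intro sum_mono inv_fact_le)
  also have "\<dots> \<le> (\<Sum>j. (1/2) * (1/3::real)^j)"
    by (intro sum_le_suminf summable_mult summable_geometric) auto
  also have "\<dots> = (1/2) * (\<Sum>j. (1/3::real)^j)"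
    by (rule suminf_mult[OF summable_geometric]) simp
  also have "\<dots> = 3/4"
    using suminf_geometric[of "1/3::real"] by simp
  finally show ?thesis .
qed

lemma fact_add_le: "fact (k + r) \<le> fact r * real (k+1)^r * (fact k :: real)"
proof (induction r)
  case 0 then show ?case by simp
next
  case (Suc r)
  have "fact (k + Suc r) = real (k + r + 1) * (fact (k + r) :: real)" by simp
  also have "\<dots> \<le> (real (r+1) * real (k+1)) * (fact r * real (k+1)^r * fact k)"
    by (intro mult_mono Suc.IH) (auto simp: algebra_simps)
  also have "\<dots> = fact (Suc r) * real (k+1)^Suc r * fact k" by (simp add: algebra_simps)
  finally show ?case .
qed

lemma base_bound:
  fixes Dm :: real and r :: nat
  assumes Dm: "0 \<le> Dm"
  shows "\<exists>M\<ge>0. \<forall>D w. 8 \<le> Re D \<and> norm D \<le> Dm \<and> 2 - real i \<le> Re w \<and> \<bar>Im w\<bar> \<le> real r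
            \<longrightarrow> norm (RR D w) \<le> M * 8 powr (- Re w)"
proof (induction i)
  case 0
  show ?case
  proof (intro exI[of _ "(64 * S2 + 8) * exp (real r * pi/2)"] conjI allI impI)
    show "0 \<le> (64 * S2 + 8) * exp (real r * pi/2)"
    proof -
      have "0 \<le> S2" unfolding S2_def using summable_shift_powr[of 2] by (intro suminf_nonneg) auto
      then show ?thesis by simp
    qed
    fix D w assume h: "8 \<le> Re D \<and> norm D \<le> Dm \<and> 2 - real 0 \<le> Re w \<and> \<bar>Im w\<bar> \<le> real r"
    then have "RR D w = Zs D w - TT D w" by (intro RR_R0) auto
    then show "norm (RR D w) \<le> (64 * S2 + 8) * exp (real r * pi/2) * 8 powr (- Re w)"
      using R0_bound[of D w "real r"] h by simp
  qed
next
  case (Suc i)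
  from Suc.IH obtain M where M0: "0 \<le> M" and M: "\<And>D w. 8 \<le> Re D \<Longrightarrow> norm D \<le> Dm \<Longrightarrow> 2 - real i \<le> Re w
      \<Longrightarrow> \<bar>Im w\<bar> \<le> real r \<Longrightarrow> norm (RR D w) \<le> M * 8 powr (- Re w)" by blast
  define \<rho> where "\<rho> = i + r + 2"
  define c where "c = 2^\<rho> * Dm powr \<rho> * exp (\<rho>*pi/2) + 2^\<rho> * 4 * M * 8 powr \<rho>"
  have c0: "0 \<le> c" unfolding c_def using M0 Dm by simp
  show ?case
  proof (intro exI[of _ "max M (128 * c)"] conjI allI impI)
    show "0 \<le> max M (128 * c)" using M0 by simp
    fix D w assume h: "8 \<le> Re D \<and> norm D \<le> Dm \<and> 2 - real (Suc i) \<le> Re w \<and> \<bar>Im w\<bar> \<le> real r"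
    then have D: "8 \<le> Re D" and nD: "norm D \<le> Dm" and Rw: "2 - real (Suc i) \<le> Re w" and Iw: "\<bar>Im w\<bar> \<le> real r"
      by auto
    show "norm (RR D w) \<le> max M (128 * c) * 8 powr (- Re w)"
    proof (cases "2 - real i \<le> Re w")
      case True
      then have "norm (RR D w) \<le> M * 8 powr (- Re w)" by (intro M D nD Iw)
      also have "\<dots> \<le> max M (128 * c) * 8 powr (- Re w)" by (intro mult_right_mono) auto
      finally show ?thesis .
    next
      case False
      have nw: "norm w \<le> real \<rho>"
      proof -
        have "norm w \<le> \<bar>Re w\<bar> + \<bar>Im w\<bar>" by (rule cmod_le)
        also have "\<dots> \<le> real \<rho>" using False Rw Iw by (simp add: \<rho>_def)
        finally show ?thesis .
      qed
      have tb: "norm (pp j w * D powr (1 - w - of_nat (Suc j)) + bb j w * RR D (w + of_nat (Suc j))) \<le> c * (1/2)^j" for j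
      proof -
        have G: "norm (RR D (w + of_nat (Suc j))) \<le> M * 8 powr (- Re (w + of_nat (Suc j)))"
          by (rule M[OF D nD]) (use Rw Iw in auto)
        have "norm (pp j w * D powr (1 - w - of_nat (Suc j)) + bb j w * RR D (w + of_nat (Suc j)))
              \<le> 2^\<rho> * norm D powr \<rho> * exp (\<rho>*pi/2) * (1/2)^j + 2^\<rho> * 4 * M * 8 powr \<rho> * (1/2)^j"
          by (rule order.trans[OF norm_triangle_ineq add_mono[OF pp_part[OF D nw] bb_part[where G="RR D", OF nw G]]])
        also have "\<dots> \<le> 2^\<rho> * Dm powr \<rho> * exp (\<rho>*pi/2) * (1/2)^j + 2^\<rho> * 4 * M * 8 powr \<rho> * (1/2)^j"
          by (intro add_mono mult_right_mono mult_left_mono powr_mono2 nD) auto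
        also have "\<dots> = c * (1/2)^j" by (simp add: c_def algebra_simps)
        finally show ?thesis .
      qed
      have "norm (RR D w) = norm (Op D (RR D) w)" using RR_rec[OF D] by metis
      also have "\<dots> \<le> (\<Sum>j. c * (1/2)^j)" by (rule Op_norm_le[OF tb summable_half])
      also have "\<dots> = 2 * c" by (rule geom_half_sum)
      also have "\<dots> \<le> 128 * c * 8 powr (- Re w)"
      proof -
        have "8 powr (-2) \<le> 8 powr (- Re w)" using False by (intro powr_mono) auto
        then have "1/64 \<le> 8 powr (- Re w)" by (simp add: powr_minus_divide)
        then have "128 * c * (1/64) \<le> 128 * c * 8 powr (- Re w)" using c0 by (intro mult_left_mono) auto
        then show ?thesis by simp
      qed
      also have "\<dots> \<le> max M (128 * c) * 8 powr (- Re w)" by (intro mult_right_mono) auto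
      finally show ?thesis .
    qed
  qed
qed



lemma main_bound:
  fixes Dm MB :: real and r :: nat and s D :: complex
  assumes Dm: "1 \<le> Dm" and MB: "0 \<le> MB"
    and s: "norm s \<le> real r" and D: "8 \<le> Re D" and nD: "norm D \<le> Dm"
    and base: "\<And>l. 1 \<le> l \<Longrightarrow> norm (RR D (s + of_nat l)) \<le> MB * 8 powr (- Re (s + of_nat l))"
  shows "norm (RR D (s - of_nat k)) \<le> 4 * (2 + 8*MB) * exp (max (2 * Dm * exp (pi/2)) 16) * fact (k + r)"
proof (induction k rule: less_induct)
  case (less k)
  define \<Lambda> where "\<Lambda> = 2 * Dm * exp (pi/2)"
  define L where "L = max \<Lambda> 16"
  define C where "C = 4 * (2 + 8*MB) * exp L"
  have C0: "0 \<le> C" unfolding C_def using MB by simp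
  have IH: "\<And>k'. k' < k \<Longrightarrow> norm (RR D (s - of_nat k')) \<le> C * fact (k' + r)"
    using less.IH by (simp add: C_def L_def \<Lambda>_def)
  define w where "w = s - of_nat k"
  define \<rho> where "\<rho> = k + r"
  have nw: "norm w \<le> real \<rho>"
    unfolding w_def \<rho>_def using norm_triangle_ineq4[of s "of_nat k"] s by simp
  define g where "g j = \<Lambda>^\<rho> * (1/2)^j + (if j < k then C * fact \<rho> / fact (j+2) else 0) + 4*MB*16^\<rho>*(1/2::real)^j" for j
  have P1: "2^\<rho> * norm D powr \<rho> * exp (\<rho>*pi/2) \<le> \<Lambda>^\<rho>"
  proof -
    have "2^\<rho> * norm D powr \<rho> * exp (\<rho>*pi/2) \<le> 2^\<rho> * Dm powr \<rho> * exp (\<rho>*pi/2)"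
      by (intro mult_right_mono mult_left_mono powr_mono2 nD) auto
    also have "\<dots> = \<Lambda>^\<rho>"
    proof -
      have a: "Dm powr \<rho> = Dm ^ \<rho>" using Dm by (simp add: powr_realpow)
      have b: "exp (\<rho>*pi/2) = exp (pi/2) ^ \<rho>" using exp_of_nat_mult[of \<rho> "pi/2"] by simp
      show ?thesis unfolding a b by (simp add: \<Lambda>_def power_mult_distrib)
    qed
    finally show ?thesis .
  qed
  have tb: "norm (pp j w * D powr (1 - w - of_nat (Suc j)) + bb j w * RR D (w + of_nat (Suc j))) \<le> g j" for j
  proof -
    have pp1: "norm (pp j w * D powr (1 - w - of_nat (Suc j))) \<le> \<Lambda>^\<rho> * (1/2)^j"
      using order.trans[OF pp_part[OF D nw, of j] mult_right_mono[OF P1]] by simp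
    have bb1: "norm (bb j w * RR D (w + of_nat (Suc j))) \<le>
          (if j < k then C * fact \<rho> / fact (j+2) else 0) + 4*MB*16^\<rho>*(1/2::real)^j"
    proof (cases "j < k")
      case True
      have e: "w + of_nat (Suc j) = s - of_nat (k - Suc j)"
        using True by (simp add: w_def of_nat_diff)
      have R: "norm (RR D (w + of_nat (Suc j))) \<le> C * fact (k - Suc j + r)"
        unfolding e by (rule IH) (use True in simp)
      have B: "norm (bb j w) \<le> real ((k + r) choose Suc j) / real (Suc (Suc j))"
      proof -
        have "norm ((of_nat k - s) gchoose Suc j) \<le> real ((k + r) choose Suc j)"
        proof (rule norm_gchoose_le)
          fix i assume i: "i < Suc j"
          then have ik: "i \<le> k" using True by simp
          have eq: "of_nat k - s - of_nat i = of_nat (k - i) - s" using ik by (simp add: of_nat_diff)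
          have "norm (of_nat k - s - of_nat i) = norm (of_nat (k - i) - s)" by (simp only: eq)
          also have "\<dots> \<le> norm (of_nat (k - i) :: complex) + norm s" by (rule norm_triangle_ineq4)
          also have "\<dots> = real (k - i) + norm s" by (simp only: norm_of_nat)
          finally have "norm (of_nat k - s - of_nat i) \<le> real (k - i) + norm s" .
          then show "norm (of_nat k - s - of_nat i) \<le> real (k + r) - real i" using s ik by (simp add: of_nat_diff)
        qed (use True in simp)
        moreover have "-w = of_nat k - s" by (simp add: w_def)
        ultimately show ?thesis unfolding bb_def by (simp add: norm_divide del: of_nat_Suc) (simp add: divide_right_mono)
      qed
      have "norm (bb j w * RR D (w + of_nat (Suc j))) \<le> real ((k + r) choose Suc j) / real (Suc (Suc j)) * (C * fact (k - Suc j + r))"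
        unfolding norm_mult by (intro mult_mono B R) auto
      also have "\<dots> = C * fact \<rho> / fact (j+2)"
      proof -
        have le: "Suc j \<le> k + r" using True by simp
        have "real ((k + r) choose Suc j) = fact (k+r) / (fact (Suc j) * fact (k + r - Suc j))"
          by (rule binomial_fact[OF le])
        moreover have "k - Suc j + r = k + r - Suc j" using True by simp
        moreover have "fact (j+2) = real (Suc (Suc j)) * fact (Suc j)" by (simp add: algebra_simps)
        ultimately show ?thesis by (simp add: \<rho>_def field_simps del: of_nat_Suc fact_Suc)
      qed
      finally have X: "norm (bb j w * RR D (w + of_nat (Suc j))) \<le> C * fact \<rho> / fact (j+2)" .
      have nn: "0 \<le> 4*MB*16^\<rho>*(1/2::real)^j" using MB by simp
      show ?thesis unfolding if_P[OF True] by (rule add_increasing2[OF nn X])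
    next
      case False
      define l where "l = Suc j - k"
      have l1: "1 \<le> l" using False by (simp add: l_def)
      have e: "w + of_nat (Suc j) = s + of_nat l" using False by (simp add: w_def l_def of_nat_diff)
      have G: "norm (RR D (w + of_nat (Suc j))) \<le> MB * 8 powr (- Re (w + of_nat (Suc j)))"
        unfolding e by (rule base[OF l1])
      have "norm (bb j w * RR D (w + of_nat (Suc j))) \<le> 2^\<rho> * 4 * MB * 8 powr \<rho> * (1/2)^j"
        by (rule bb_part[where G="RR D", OF nw G])
      also have "2^\<rho> * 4 * MB * 8 powr \<rho> * (1/2)^j = 4*MB*16^\<rho>*(1/2::real)^j"
        by (simp add: powr_realpow power_mult_distrib[symmetric])
      finally show ?thesis using False by simp
    qed
    have "norm (pp j w * D powr (1 - w - of_nat (Suc j)) + bb j w * RR D (w + of_nat (Suc j)))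
       \<le> norm (pp j w * D powr (1 - w - of_nat (Suc j))) + norm (bb j w * RR D (w + of_nat (Suc j)))"
      by (rule norm_triangle_ineq)
    also have "\<dots> \<le> g j" using pp1 bb1 by (simp add: g_def)
    finally show ?thesis .
  qed
  have s2: "summable (\<lambda>j. if j < k then C * fact \<rho> / fact (j+2) else (0::real))"
    by (rule summable_finite[of "{..<k}"]) auto
  have sg: "summable g" unfolding g_def
    by (intro summable_add summable_half s2)
  have sumg: "suminf g = 2 * \<Lambda>^\<rho> + (\<Sum>j<k. C * fact \<rho> / fact (j+2)) + 2 * (4*MB*16^\<rho>)"
  proof -
    define g1 where "g1 j = \<Lambda>^\<rho> * (1/2::real)^j" for j
    define g2 where "g2 j = (if j < k then C * fact \<rho> / fact (j+2) else (0::real))" for j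
    define g3 where "g3 j = 4*MB*16^\<rho>*(1/2::real)^j" for j
    have s1: "summable g1" "summable g2" "summable g3"
      unfolding g1_def g2_def g3_def by (intro summable_half s2)+
    have "suminf g = suminf (\<lambda>j. g1 j + g2 j) + suminf g3"
      unfolding g_def g1_def[symmetric] g2_def[symmetric] g3_def[symmetric]
      by (rule suminf_add[symmetric]) (intro summable_add s1, rule s1)
    also have "suminf (\<lambda>j. g1 j + g2 j) = suminf g1 + suminf g2"
      by (rule suminf_add[symmetric]) (rule s1)+
    finally have "suminf g = (\<Sum>j. \<Lambda>^\<rho> * (1/2)^j) + (\<Sum>j. if j < k then C * fact \<rho> / fact (j+2) else 0) + (\<Sum>j. 4*MB*16^\<rho>*(1/2::real)^j)"
      unfolding g1_def g2_def g3_def .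
    also have "(\<Sum>j. if j < k then C * fact \<rho> / fact (j+2) else 0) = (\<Sum>j<k. C * fact \<rho> / fact (j+2))"
      by (subst suminf_finite[of "{..<k}"]) auto
    finally show ?thesis by (simp only: geom_half_sum)
  qed
  have "norm (RR D w) = norm (Op D (RR D) w)" using RR_rec[OF D] by metis
  also have "\<dots> \<le> suminf g" by (rule Op_norm_le[OF tb sg])
  also have "\<dots> \<le> 2 * \<Lambda>^\<rho> + C * fact \<rho> * (3/4) + 2 * (4*MB*16^\<rho>)"
  proof -
    have "(\<Sum>j<k. C * fact \<rho> / fact (j+2)) = C * fact \<rho> * (\<Sum>j<k. 1 / fact (j+2))"
      by (simp add: sum_distrib_left)
    also have "\<dots> \<le> C * fact \<rho> * (3/4)" by (intro mult_left_mono inv_fact_sum) (use C0 in auto)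
    finally show ?thesis unfolding sumg by simp
  qed
  also have "\<dots> \<le> C * fact \<rho>"
  proof -
    have L0: "0 \<le> L" by (simp add: L_def)
    have "\<Lambda>^\<rho> \<le> L^\<rho>" unfolding L_def by (intro power_mono) (use Dm in \<open>auto simp: \<Lambda>_def\<close>)
    moreover have "(16::real)^\<rho> \<le> L^\<rho>" unfolding L_def by (intro power_mono) auto
    ultimately have "2 * \<Lambda>^\<rho> + 2 * (4*MB*16^\<rho>) \<le> (2 + 8*MB) * L^\<rho>"
      using MB by (simp add: algebra_simps) (smt (verit) mult_left_mono)
    also have "\<dots> \<le> (2 + 8*MB) * (exp L * fact \<rho>)"
      by (intro mult_left_mono pow_le_exp_fact L0) (use MB in simp)
    also have "\<dots> = C * fact \<rho> / 4" by (simp add: C_def)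
    finally show ?thesis by simp
  qed
  finally show ?case by (simp add: w_def \<rho>_def C_def L_def \<Lambda>_def)
qed



lemma exp2_ge: "2 * pi \<le> exp (2::real)"
proof -
  have s: "(\<lambda>n. 2^n /\<^sub>R fact n) sums exp (2::real)" by (rule exp_converges)
  have "(\<Sum>n\<in>{..<5}. (2::real)^n /\<^sub>R fact n) \<le> exp 2"
    using sum_le_suminf[OF sums_summable[OF s], of "{..<5}"] s by (simp add: sums_iff)
  moreover have "(\<Sum>n\<in>{..<5}. (2::real)^n /\<^sub>R fact n) = 7"
    by (simp add: lessThan_Suc eval_nat_numeral fact_Suc)
  moreover have "pi \<le> 3.1415926535899" by (rule pi_approx(2))
  ultimately show ?thesis by simp
qed

lemma powr_two_sided:
  fixes x e a b :: real
  assumes x: "0 < x" and lo: "a \<le> x" and hi: "x \<le> b" and a0: "0 < a" and b1: "1 \<le> b"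
    and e1: "- real r \<le> e" and e2: "e \<le> real m"
  shows "x powr e \<le> (1/a) powr real r + b ^ m"
proof (cases "1 \<le> x")
  case True
  have "x powr e \<le> x powr real m" by (rule powr_mono[OF e2 True])
  also have "\<dots> \<le> b powr real m" by (rule powr_mono2) (use x hi in auto)
  also have "\<dots> = b ^ m" using b1 by (simp add: powr_realpow)
  finally show ?thesis by (smt (verit) powr_ge_zero)
next
  case False
  have "x powr e \<le> x powr (- real r)" by (rule powr_mono'[OF e1]) (use x False in auto)
  also have "\<dots> \<le> a powr (- real r)" by (rule powr_mono2') (use x lo a0 in auto)
  also have "\<dots> = (1/a) powr real r" using a0 by (simp add: powr_minus_divide powr_divide)
  finally show ?thesis using b1 by (smt (verit) zero_le_power)
qed

theorem lemma4p6:
  fixes \<delta> r' :: real and r :: nat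
  assumes "\<delta> > 0" and "r \<ge> 1" and "r' > 1"
  shows "\<exists>C>0. \<forall>d s k. 1 / r' \<le> Re d \<and> cmod d \<le> r' \<and> s \<in> Dbar \<delta> r \<longrightarrow>
           cmod (hurwitz_zeta (s - of_nat k) d)
             \<le> C * (exp 2 / (2 * pi)) ^ k * fact k * (real k + 1) ^ (r + 1) * (1 + r' ^ (2 * k))"
proof -
  note dl = assms(1) and r1 = assms(3)
  define Dm where "Dm = r' + 8"
  have Dm1: "1 \<le> Dm" using r1 by (simp add: Dm_def)
  obtain MB where MB0: "0 \<le> MB" and MB: "\<And>D w. 8 \<le> Re D \<Longrightarrow> norm D \<le> Dm \<Longrightarrow> 2 - real (r+1) \<le> Re w
      \<Longrightarrow> \<bar>Im w\<bar> \<le> real r \<Longrightarrow> norm (RR D w) \<le> MB * 8 powr (- Re w)"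
    using base_bound[where Dm=Dm and r=r and i="r+1"] Dm1 by auto
  define Cm where "Cm = 4 * (2 + 8*MB) * exp (max (2 * Dm * exp (pi/2)) 16)"
  define E where "E = exp (real r * pi/2)"
  define K where "K = 8 * r' powr real r * E + (8 * Dm^r * E + Dm^(r+1) * E / \<delta>) * exp Dm + Cm * fact r"
  have E0: "0 < E" by (simp add: E_def)
  have Cm0: "0 \<le> Cm" using MB0 by (simp add: Cm_def)
  have K0: "0 \<le> K" unfolding K_def using E0 Cm0 Dm1 dl by (intro add_nonneg_nonneg mult_nonneg_nonneg) auto
  have main: "cmod (hurwitz_zeta (s - of_nat k) d) \<le> K * (fact k * (real k + 1) ^ r)"
    if hd: "1 / r' \<le> Re d" "cmod d \<le> r'" and hs: "s \<in> Dbar \<delta> r" for d s k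
  proof -
    have rd: "0 < Re d" using hd(1) r1 by (smt (verit) divide_pos_pos)
    define D where "D = d + 8"
    have D8: "8 \<le> Re D" using rd by (simp add: D_def)
    have nD: "norm D \<le> Dm" unfolding D_def Dm_def using norm_triangle_ineq[of d 8] hd(2) by simp
    have ns: "norm s \<le> real r" using hs unfolding Dbar_def by blast
    have sep: "\<And>n::nat. 1 \<le> n \<Longrightarrow> \<delta> \<le> norm (s - of_nat n)" using hs unfolding Dbar_def by blast
    have Res: "- real r \<le> Re s" using ns abs_Re_le_cmod[of s] by linarith
    have Ims: "\<bar>Im s\<bar> \<le> real r" using ns abs_Im_le_cmod[of s] by linarith
    define w where "w = s - of_nat k"
    have w1: "\<delta> \<le> norm (w - 1)"
    proof -
      have "w - 1 = s - of_nat (Suc k)" by (simp add: w_def)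
      then show ?thesis using sep[of "Suc k"] by (simp only:)
    qed
    have wn1: "w \<noteq> 1" using w1 dl by auto
    have H: "hurwitz_zeta w d = (\<Sum>n<8. (of_nat n + d) powr (-w)) + TT D w + RR D w"
      using hurwitz_eq[OF rd, of w] wn1 by (simp add: Hf_def D_def)
    have A: "norm ((of_nat n + d) powr (-w)) \<le> (r' powr real r + Dm^(k+r)) * E" if "n < 8" for n
    proof -
      have R: "0 < Re (of_nat n + d)" using rd by simp
      have "norm ((of_nat n + d) powr (-w)) \<le> norm (of_nat n + d) powr Re (-w) * exp (\<bar>Im (-w)\<bar> * pi/2)"
        by (rule norm_powr_le[OF R])
      also have "\<dots> \<le> (r' powr real r + Dm^(k+r)) * E"
      proof (rule mult_mono)
        have lo: "1/r' \<le> norm (of_nat n + d)"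
          using hd(1) complex_Re_le_cmod[of "of_nat n + d"] by simp
        have hi: "norm (of_nat n + d) \<le> Dm"
          using norm_triangle_ineq[of "of_nat n" d] hd(2) that by (simp add: Dm_def)
        have x0: "0 < norm (of_nat n + d)" using R by (metis complex_Re_le_cmod less_le_trans)
        have "norm (of_nat n + d) powr Re (-w) \<le> (1/(1/r')) powr real r + Dm ^ (k+r)"
          by (rule powr_two_sided[OF x0 lo hi _ Dm1]) (use r1 Res ns abs_Re_le_cmod[of s] in \<open>auto simp: w_def\<close>)
        then show "norm (of_nat n + d) powr Re (-w) \<le> r' powr real r + Dm ^ (k+r)" by simp
        show "exp (\<bar>Im (-w)\<bar> * pi/2) \<le> E" unfolding E_def using Ims by (simp add: w_def)
      qed (use E0 Dm1 in auto)
      finally show ?thesis .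
    qed
    have Asum: "norm (\<Sum>n<8. (of_nat n + d) powr (-w)) \<le> 8 * ((r' powr real r + Dm^(k+r)) * E)"
    proof -
      have "norm (\<Sum>n<8. (of_nat n + d) powr (-w)) \<le> (\<Sum>n<8. norm ((of_nat n + d) powr (-w)))"
        by (rule norm_sum)
      also have "\<dots> \<le> (\<Sum>n<(8::nat). (r' powr real r + Dm^(k+r)) * E)"
        by (intro sum_mono A) simp
      finally show ?thesis by simp
    qed
    have B: "norm (TT D w) \<le> Dm^(k+r+1) * E / \<delta>"
    proof -
      have RD: "0 < Re D" using D8 by simp
      have nD8: "8 \<le> norm D" using D8 complex_Re_le_cmod[of D] by linarith
      have "norm (D powr (1 - w)) \<le> norm D powr Re (1 - w) * exp (\<bar>Im (1-w)\<bar> * pi/2)"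
        by (rule norm_powr_le[OF RD])
      also have "\<dots> \<le> Dm^(k+r+1) * E"
      proof (rule mult_mono)
        have "norm D powr Re (1 - w) \<le> norm D powr real (k+r+1)"
          by (rule powr_mono) (use Res nD8 in \<open>auto simp: w_def\<close>)
        also have "\<dots> \<le> Dm powr real (k+r+1)" by (rule powr_mono2) (use nD in auto)
        also have "\<dots> = Dm^(k+r+1)" by (rule powr_realpow) (use Dm1 in linarith)
        finally show "norm D powr Re (1 - w) \<le> Dm^(k+r+1)" .
        show "exp (\<bar>Im (1-w)\<bar> * pi/2) \<le> E" unfolding E_def using Ims by (simp add: w_def)
      qed (use E0 Dm1 in auto)
      finally have n1: "norm (D powr (1 - w)) \<le> Dm^(k+r+1) * E" .
      have "norm (TT D w) = norm (D powr (1 - w)) / norm (w - 1)" by (simp add: TT_def norm_divide)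
      also have "\<dots> \<le> Dm^(k+r+1) * E / \<delta>"
        by (rule frac_le) (use n1 w1 dl E0 Dm1 in auto)
      finally show ?thesis .
    qed
    have C: "norm (RR D w) \<le> Cm * fact (k + r)"
    proof -
      have base: "norm (RR D (s + of_nat l)) \<le> MB * 8 powr (- Re (s + of_nat l))" if "1 \<le> l" for l
        by (rule MB[OF D8 nD]) (use that Res Ims in auto)
      show ?thesis unfolding w_def Cm_def by (rule main_bound[OF Dm1 MB0 ns D8 nD base])
    qed
    define F where "F = fact k * (real k + 1) ^ r"
    have F1: "1 \<le> F"
    proof -
      have a: "1 \<le> (fact k :: real)" by (rule fact_ge_1)
      have b: "1 \<le> (real k + 1) ^ r" by (rule one_le_power) simp
      show ?thesis unfolding F_def using mult_mono[OF a b] by simp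
    qed
    have "norm (hurwitz_zeta w d) \<le> 8 * ((r' powr real r + Dm^(k+r)) * E) + Dm^(k+r+1) * E / \<delta> + Cm * fact (k + r)"
      unfolding H using Asum B C norm_triangle_ineq[of "(\<Sum>n<8. (of_nat n + d) powr (-w)) + TT D w" "RR D w"]
        norm_triangle_ineq[of "(\<Sum>n<8. (of_nat n + d) powr (-w))" "TT D w"] by linarith
    also have "\<dots> \<le> K * F"
    proof -
      have Dk: "Dm^k \<le> exp Dm * fact k" by (rule pow_le_exp_fact) (use Dm1 in simp)
      have Fk: "fact k \<le> F" unfolding F_def using mult_left_mono[of 1 "(real k + 1)^r" "fact k"] by simp
      have t1: "8 * r' powr real r * E \<le> 8 * r' powr real r * E * F"
        using mult_left_mono[OF F1, of "8 * r' powr real r * E"] E0 by simp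
      have t2: "8 * Dm^(k+r) * E \<le> 8 * Dm^r * E * exp Dm * F"
      proof -
        have "8 * Dm^(k+r) * E = 8 * Dm^r * E * Dm^k" by (simp add: power_add)
        also have "\<dots> \<le> 8 * Dm^r * E * (exp Dm * F)"
          by (intro mult_left_mono order.trans[OF Dk] mult_left_mono[OF Fk]) (use E0 Dm1 in auto)
        finally show ?thesis by (simp add: mult_ac)
      qed
      have t3: "Dm^(k+r+1) * E / \<delta> \<le> Dm^(r+1) * E / \<delta> * exp Dm * F"
      proof -
        have "Dm^(k+r+1) * E / \<delta> = Dm^(r+1) * E / \<delta> * Dm^k" by (simp add: power_add)
        also have "\<dots> \<le> Dm^(r+1) * E / \<delta> * (exp Dm * F)"
          by (intro mult_left_mono order.trans[OF Dk] mult_left_mono[OF Fk]) (use E0 Dm1 dl in auto)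
        finally show ?thesis by (simp add: mult_ac)
      qed
      have t4: "Cm * fact (k + r) \<le> Cm * fact r * F"
        using mult_left_mono[OF fact_add_le[of k r] Cm0] by (simp add: F_def mult_ac add_ac)
      show ?thesis using t1 t2 t3 t4 unfolding K_def by (simp add: algebra_simps)
    qed
    finally show ?thesis by (simp add: w_def F_def)
  qed
  show ?thesis
  proof (intro exI[of _ "K + 1"] conjI allI impI)
    show "0 < K + 1" using K0 by simp
    fix d s k assume h: "1 / r' \<le> Re d \<and> cmod d \<le> r' \<and> s \<in> Dbar \<delta> r"
    have "cmod (hurwitz_zeta (s - of_nat k) d) \<le> K * (fact k * (real k + 1) ^ r)"
      using main h by blast
    also have "\<dots> \<le> (K + 1) * (exp 2 / (2 * pi)) ^ k * fact k * (real k + 1) ^ (r + 1) * (1 + r' ^ (2 * k))"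
    proof -
      have g1: "1 \<le> (exp 2 / (2 * pi)) ^ k" using exp2_ge by (intro one_le_power) simp
      have g2: "(real k + 1) ^ r \<le> (real k + 1) ^ (r+1)" by (intro power_increasing) auto
      have g3: "1 \<le> 1 + r' ^ (2 * k)" using r1 by simp
      have f0: "0 \<le> fact k * (real k + 1) ^ r" by simp
      have "K * (fact k * (real k + 1) ^ r) \<le> (K + 1) * (fact k * (real k + 1) ^ r)"
        using f0 by (simp add: mult_right_mono)
      also have "\<dots> \<le> (K + 1) * ((exp 2 / (2 * pi)) ^ k * (fact k * (real k + 1) ^ (r + 1)) * (1 + r' ^ (2 * k)))"
      proof (intro mult_left_mono)
        have "fact k * (real k + 1) ^ r \<le> fact k * (real k + 1) ^ (r + 1)"
          by (intro mult_left_mono g2) simp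
        also have "\<dots> \<le> (exp 2 / (2 * pi)) ^ k * (fact k * (real k + 1) ^ (r + 1))"
          using mult_right_mono[OF g1, of "fact k * (real k + 1) ^ (r + 1)"] by simp
        also have "\<dots> \<le> (exp 2 / (2 * pi)) ^ k * (fact k * (real k + 1) ^ (r + 1)) * (1 + r' ^ (2 * k))"
          using mult_left_mono[OF g3, of "(exp 2 / (2 * pi)) ^ k * (fact k * (real k + 1) ^ (r + 1))"] by simp
        finally show "fact k * (real k + 1) ^ r \<le> (exp 2 / (2 * pi)) ^ k * (fact k * (real k + 1) ^ (r + 1)) * (1 + r' ^ (2 * k))" .
      qed (use K0 in simp)
      finally show ?thesis by (simp add: mult_ac)
    qed
    finally show "cmod (hurwitz_zeta (s - of_nat k) d)
             \<le> (K + 1) * (exp 2 / (2 * pi)) ^ k * fact k * (real k + 1) ^ (r + 1) * (1 + r' ^ (2 * k))" .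
  qed
qed


end
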